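(* Let $0<c<1$, $\beta_1,\dots,\beta_p>0$ with $\beta_i-\beta_j\notin\mathbb Z$ for $i\neq j$, and let $M^{(\mathrm{II})}_{2:\vec n}$ be the type II multiple Meixner polynomials of the second kind. Then for $x\in\mathbb N_0$ (and hence as polynomials) $$M^{(\mathrm{II})}_{2:\vec n}(x;\vec\beta,c)=\Big(\frac{c}{c-1}\Big)^{|\vec n|}\prod_{j=1}^p(\beta_j)_{n_j}\,\frac{1}{c^x}\;{}_{p+1}F_p\!\left(\begin{matrix}-x,\beta_1+n_1,\dots,\beta_p+n_p\\ \beta_1,\dots,\beta_p\end{matrix};1-c\right).$$
   Context: $(a)_m$ is the Pochhammer symbol; ${}_{p+1}F_p(a_1,\dots,a_{p+1};b_1,\dots,b_p;z)=\sum_{l\ge0}\frac{(a_1)_l\cdots(a_{p+1})_l}{(b_1)_l\cdots(b_p)_l}\frac{z^l}{l!}$. Multiple Meixner weights of the second kind: $w_i(x)=\frac{\Gamma(\beta_i+x)}{\Gamma(\beta_i)\Gamma(x+1)}c^x$, $x\in\Delta=\mathbb N_0$, $i=1,\dots,p$. The type II polynomial for multi-index $\vec n\in\mathbb N_0^p$ is the monic polynomial $B$ of degree $|\vec n|=n_1+\dots+n_p$ with $\sum_{k\ge0}k^jB(k)w_i(k)=0$ for $0\le j\le n_i-1$, $1\le i\le p$. *)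

theory Defs
  imports "HOL-Analysis.Analysis" "HOL-Computational_Algebra.Polynomial"
begin

definition hypergeom :: "real list \<Rightarrow> real list \<Rightarrow> real \<Rightarrow> real" where
  "hypergeom as bs z =
     (\<Sum>l. (prod_list (map (\<lambda>a. pochhammer a l) as) / prod_list (map (\<lambda>b. pochhammer b l) bs))
           * z ^ l / fact l)"

definition meixner2_weight :: "real \<Rightarrow> real \<Rightarrow> nat \<Rightarrow> real" where
  "meixner2_weight \<beta> c x = Gamma (\<beta> + real x) / (Gamma \<beta> * Gamma (real x + 1)) * c ^ x"

definition is_typeII_meixner2 ::
  "nat \<Rightarrow> (nat \<Rightarrow> real) \<Rightarrow> real \<Rightarrow> (nat \<Rightarrow> nat) \<Rightarrow> real poly \<Rightarrow> bool" where
  "is_typeII_meixner2 p \<beta> c n B \<longleftrightarrow>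
     degree B = (\<Sum>i<p. n i) \<and> lead_coeff B = 1 \<and>
     (\<forall>i<p. \<forall>j<n i.
        (\<lambda>k. real k ^ j * poly B (real k) * meixner2_weight (\<beta> i) c k) sums 0)"

end

theory Submission
  imports Defs
begin


definition wt :: "real \<Rightarrow> real \<Rightarrow> nat \<Rightarrow> real" where
  "wt c \<gamma> k = pochhammer \<gamma> k * c ^ k / fact k"
definition ffpoly :: "nat \<Rightarrow> real poly" where
  "ffpoly s = (\<Prod>i<s. [:- of_nat i, 1:])"
definition pochpoly :: "real \<Rightarrow> nat \<Rightarrow> real poly" where
  "pochpoly \<gamma> t = (\<Prod>i<t. [:\<gamma> + of_nat i, 1:])"

lemma poly_ffpoly: "poly (ffpoly s) x = fact s * (x gchoose s)"
  by (simp add: ffpoly_def poly_prod gbinomial_mult_fact atLeast0LessThan)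

lemma poly_ffpoly_nat: "poly (ffpoly s) (real k) = fact s * real (k choose s)"
  by (simp add: poly_ffpoly binomial_gbinomial)

lemma poly_ffpoly_neg: "poly (ffpoly s) (- g) = (-1)^s * pochhammer g s"
proof -
  have "poly (ffpoly s) (- g) = (\<Prod>i<s. (-1) * (g + of_nat i))"
    by (simp add: ffpoly_def poly_prod, rule prod.cong, simp_all)
  also have "\<dots> = (\<Prod>i<s. (-1::real)) * (\<Prod>i<s. g + of_nat i)"
    by (rule prod.distrib)
  also have "\<dots> = (-1)^s * pochhammer g s"
    by (simp add: pochhammer_prod atLeast0LessThan)
  finally show ?thesis .
qed

lemma poly_pochpoly: "poly (pochpoly g t) x = pochhammer (g + x) t"
  by (simp add: pochpoly_def poly_prod pochhammer_prod atLeast0LessThan algebra_simps)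

lemma degree_ffpoly: "degree (ffpoly s) = s"
  unfolding ffpoly_def by (subst degree_prod_eq_sum_degree) auto

lemma lc_ffpoly: "lead_coeff (ffpoly s) = 1"
  unfolding ffpoly_def by (simp add: lead_coeff_prod)

lemma degree_pochpoly: "degree (pochpoly g s) = s"
  unfolding pochpoly_def by (subst degree_prod_eq_sum_degree) auto

lemma lc_pochpoly: "lead_coeff (pochpoly g s) = 1"
  unfolding pochpoly_def by (simp add: lead_coeff_prod)

lemma negbin:
  fixes c a :: real assumes "\<bar>c\<bar> < 1"
  shows "(\<lambda>j. pochhammer a j * c^j / fact j) sums (1 - c) powr (-a)"
proof -
  have "(\<lambda>j. ((-a) gchoose j) * (-c)^j) sums (1 + (-c)) powr (-a)"
    by (rule gen_binomial_real) (use assms in auto)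
  moreover have "((-a) gchoose j) * (-c)^j = pochhammer a j * c^j / fact j" for j
  proof -
    have e: "(-c)^j = (-1)^j * c^j" by (rule power_minus)
    have f: "(-1::real)^j * (-1)^j = 1" by (simp flip: power_mult_distrib)
    have "((-a) gchoose j) * (-c)^j = ((-1)^j * (-1)^j) * (pochhammer a j * c^j / fact j)"
      unfolding e gbinomial_pochhammer minus_minus by (simp add: mult_ac)
    thus ?thesis using f by simp
  qed
  ultimately show ?thesis by simp
qed


lemma L_ff:
  assumes "0 < c" "c < 1"
  shows "(\<lambda>k. poly (ffpoly s) (real k) * wt c g k) sums
           (pochhammer g s * c^s * (1-c) powr (-(g + real s)))"
proof -
  define f where "f = (\<lambda>k. poly (ffpoly s) (real k) * wt c g k)"
  have shift: "f (j + s) = pochhammer g s * c^s * (pochhammer (g + real s) j * c^j / fact j)" for j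
  proof -
    have "poly (ffpoly s) (real (j+s)) = fact s * real ((j+s) choose s)"
      by (rule poly_ffpoly_nat)
    also have "\<dots> = fact (j+s) / fact j"
      by (subst binomial_fact) auto
    finally have "poly (ffpoly s) (real (j+s)) = fact (j+s) / fact j" .
    moreover have "pochhammer g (j+s) = pochhammer g s * pochhammer (g + real s) j"
      using pochhammer_product'[of g s j] by (simp add: add.commute)
    ultimately show ?thesis
      by (simp add: f_def wt_def power_add field_simps)
  qed
  have zero: "(\<Sum>i<s. f i) = 0"
    by (simp add: f_def poly_ffpoly_nat, rule sum.neutral, simp add: binomial_eq_0)
  have "(\<lambda>j. pochhammer g s * c^s * (pochhammer (g + real s) j * c^j / fact j)) sums
           (pochhammer g s * c^s * (1-c) powr (-(g + real s)))"
    by (rule sums_mult, rule negbin) (use assms in auto)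
  hence "(\<lambda>j. f (j + s)) sums (pochhammer g s * c^s * (1-c) powr (-(g + real s)))"
    by (simp add: shift)
  hence "f sums (pochhammer g s * c^s * (1-c) powr (-(g + real s)) + (\<Sum>i<s. f i))"
    by (rule iffD1[OF sums_iff_shift])
  hence "f sums (pochhammer g s * c^s * (1-c) powr (-(g + real s)))" by (simp add: zero)
  thus ?thesis by (simp add: f_def)
qed

lemma expand:
  fixes b :: "nat \<Rightarrow> real poly"
  assumes db: "\<And>t. degree (b t) = t" and lb: "\<And>t. lead_coeff (b t) = 1"
  shows "degree P \<le> d \<Longrightarrow> \<exists>a. P = (\<Sum>t\<le>d. smult (a t) (b t))"
proof (induction d arbitrary: P)
  case 0
  have "b 0 = [:coeff (b 0) 0:]" using degree_0_id[of "b 0"] db[of 0] by simp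
  hence b0: "b 0 = 1" using lb[of 0] db[of 0] by (simp add: one_pCons)
  have "P = [:coeff P 0:]" using degree_0_id[of P] 0 by simp
  hence "P = (\<Sum>t\<le>0. smult (coeff P 0) (b t))" using b0
    by (simp add: smult_one)
  thus ?case by (rule exI[of _ "\<lambda>_. coeff P 0"])
next
  case (Suc d)
  define P' where "P' = P - smult (coeff P (Suc d)) (b (Suc d))"
  have "degree P' \<le> d"
  proof (rule degree_le, intro allI impI)
    fix i assume "d < i"
    show "coeff P' i = 0"
    proof (cases "i = Suc d")
      case True
      then show ?thesis using lb[of "Suc d"] db[of "Suc d"] by (simp add: P'_def)
    next
      case False
      with \<open>d < i\<close> have "Suc d < i" by simp
      hence "coeff P i = 0" "coeff (b (Suc d)) i = 0"
        using Suc.prems db[of "Suc d"] by (auto intro: coeff_eq_0)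
      thus ?thesis by (simp add: P'_def)
    qed
  qed
  then obtain a where a: "P' = (\<Sum>t\<le>d. smult (a t) (b t))" using Suc.IH by blast
  define a' where "a' = a(Suc d := coeff P (Suc d))"
  have "(\<Sum>t\<le>Suc d. smult (a' t) (b t)) = (\<Sum>t\<le>d. smult (a t) (b t)) + smult (coeff P (Suc d)) (b (Suc d))"
    by (simp add: a'_def)
  also have "\<dots> = P" using a by (simp add: P'_def)
  finally show ?case by (intro exI[of _ a']) (rule sym)
qed

lemma expand_coeff_top:
  fixes b :: "nat \<Rightarrow> real poly"
  assumes db: "\<And>t. degree (b t) = t" and lb: "\<And>t. lead_coeff (b t) = 1"
  shows "coeff (\<Sum>t\<le>d. smult (a t) (b t)) d = a d"
proof -
  have "coeff (\<Sum>t\<le>d. smult (a t) (b t)) d = (\<Sum>t\<le>d. a t * coeff (b t) d)"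
    by (simp add: coeff_sum)
  also have "\<dots> = (\<Sum>t\<in>{d}. a t * coeff (b t) d)"
  proof (rule sum.mono_neutral_right)
    show "\<forall>i\<in>{..d} - {d}. a i * coeff (b i) d = 0"
      using db by (auto intro!: coeff_eq_0 simp: less_le)
  qed auto
  also have "\<dots> = a d" using lb[of d] db[of d] by simp
  finally show ?thesis .
qed

lemma expand_degree:
  fixes b :: "nat \<Rightarrow> real poly"
  assumes db: "\<And>t. degree (b t) = t"
  shows "degree (\<Sum>t\<le>d. smult (a t) (b t)) \<le> d"
  by (rule degree_sum_le) (auto intro: order.trans[OF degree_smult_le] simp: db)

lemma binom_sum:
  fixes z :: real
  shows "(\<Sum>l\<le>x. real (x choose l) * real (l choose t) * z^l) = real (x choose t) * z^t * (1+z)^(x-t)"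
proof (cases "t \<le> x")
  case False
  then show ?thesis by (auto intro!: sum.neutral simp: binomial_eq_0)
next
  case True
  define f where "f = (\<lambda>l. real (x choose l) * real (l choose t) * z^l)"
  have "(\<Sum>l\<le>x. f l) = (\<Sum>l\<in>{t..x}. f l)"
    by (rule sum.mono_neutral_right) (auto simp: f_def binomial_eq_0)
  also have "\<dots> = (\<Sum>i\<in>{0..x-t}. f (i + t))"
    using sum.shift_bounds_cl_nat_ivl[of f 0 t "x-t"] True by simp
  also have "\<dots> = (\<Sum>i\<le>x-t. real (x choose t) * z^t * (real ((x-t) choose i) * z^i))"
  proof (rule sum.cong)
    fix i assume i: "i \<in> {..x-t}"
    have "(x choose (i+t)) * ((i+t) choose t) = (x choose t) * ((x - t) choose (i + t - t))"
      by (rule choose_mult) (use i True in auto)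
    hence "real (x choose (i+t)) * real ((i+t) choose t) = real (x choose t) * real ((x-t) choose i)"
      by (metis add_diff_cancel_right' of_nat_mult)
    thus "f (i + t) = real (x choose t) * z^t * (real ((x-t) choose i) * z^i)"
      by (simp add: f_def power_add algebra_simps)
  qed (simp add: atLeast0AtMost)
  also have "\<dots> = real (x choose t) * z^t * (\<Sum>i\<le>x-t. real ((x-t) choose i) * z^i)"
    by (simp add: sum_distrib_left)
  finally have C: "(\<Sum>l\<le>x. f l) = real (x choose t) * z^t * (\<Sum>i\<le>x-t. real ((x-t) choose i) * z^i)" .
  have B: "(\<Sum>i\<le>x-t. real ((x-t) choose i) * z^i) = (1 + z)^(x-t)"
    using binomial_ring[of z 1 "x-t"] by (simp add: add.commute)
  from C have "(\<Sum>l\<le>x. f l) = real (x choose t) * z^t * (1 + z)^(x-t)" by (simp only: B)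
  thus ?thesis unfolding f_def by simp
qed

lemma plist: "prod_list (map f [0..<p]) = (\<Prod>j<p. f j)"
  by (simp add: prod.distinct_set_conv_list[symmetric] atLeast0LessThan)



definition Qpoly :: "real \<Rightarrow> nat \<Rightarrow> (nat \<Rightarrow> real) \<Rightarrow> real poly" where
  "Qpoly c N q = smult ((c/(c-1))^N) (\<Sum>t\<le>N. smult (q t * ((c-1)/c)^t) (ffpoly t))"

lemma L_Q:
  assumes c: "0 < c" "c < 1" and R: "R = (\<Sum>t\<le>N. smult (q t) (ffpoly t))"
  shows "(\<lambda>k. poly (Qpoly c N q) (real k) * wt c g k) sums
           ((c/(c-1))^N * ((1-c) powr (-g) * poly R (-g)))"
proof -
  have tm: "(\<lambda>k. q t * ((c-1)/c)^t * (poly (ffpoly t) (real k) * wt c g k)) sums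
     (q t * ((c-1)/c)^t * (pochhammer g t * c^t * (1-c) powr (-(g + real t))))" for t
    by (rule sums_mult, rule L_ff) (use c in auto)
  have val: "q t * ((c-1)/c)^t * (pochhammer g t * c^t * (1-c) powr (-(g + real t)))
      = (1-c) powr (-g) * (q t * poly (ffpoly t) (-g))" for t
  proof -
    have "-(g + real t) = -g - real t" by simp
    hence e1: "(1-c) powr (-(g + real t)) = (1-c) powr (-g) / (1-c)^t"
      using c by (simp add: powr_diff powr_realpow)
    have "((c-1)/c)^t * c^t = ((c-1)/c * c)^t" by (rule power_mult_distrib[symmetric])
    also have "\<dots> = ((-1)*(1-c))^t" using c by simp
    also have "\<dots> = (-1)^t * (1-c)^t" by (rule power_mult_distrib)
    finally have e2: "((c-1)/c)^t * c^t = (-1)^t * (1-c)^t" .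
    have "q t * ((c-1)/c)^t * (pochhammer g t * c^t * (1-c) powr (-(g + real t)))
        = q t * (((c-1)/c)^t * c^t) * pochhammer g t * (1-c) powr (-(g + real t))"
      by (simp add: ac_simps)
    also have "\<dots> = q t * ((-1)^t * (1-c)^t) * pochhammer g t * ((1-c) powr (-g) / (1-c)^t)"
      by (simp only: e1 e2)
    also have "\<dots> = (1-c) powr (-g) * (q t * ((-1)^t * pochhammer g t))"
      using c by (simp add: field_simps)
    finally show ?thesis by (simp add: poly_ffpoly_neg)
  qed
  have "(\<lambda>k. \<Sum>t\<le>N. q t * ((c-1)/c)^t * (poly (ffpoly t) (real k) * wt c g k)) sums
      (\<Sum>t\<le>N. q t * ((c-1)/c)^t * (pochhammer g t * c^t * (1-c) powr (-(g + real t))))"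
    by (rule sums_sum[OF tm])
  note S0 = this
  have "(\<lambda>k. (c/(c-1))^N * (\<Sum>t\<le>N. q t * ((c-1)/c)^t * (poly (ffpoly t) (real k) * wt c g k))) sums
      ((c/(c-1))^N * (\<Sum>t\<le>N. (1-c) powr (-g) * (q t * poly (ffpoly t) (-g))))"
  proof (intro sums_mult)
    have "(\<Sum>t\<le>N. q t * ((c-1)/c)^t * (pochhammer g t * c^t * (1-c) powr (-(g + real t))))
       = (\<Sum>t\<le>N. (1-c) powr (-g) * (q t * poly (ffpoly t) (-g)))"
      by (intro sum.cong refl val)
    thus "(\<lambda>k. \<Sum>t\<le>N. q t * ((c-1)/c)^t * (poly (ffpoly t) (real k) * wt c g k)) sums
      (\<Sum>t\<le>N. (1-c) powr (-g) * (q t * poly (ffpoly t) (-g)))" using S0 by simp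
  qed
  moreover have "(\<Sum>t\<le>N. (1-c) powr (-g) * (q t * poly (ffpoly t) (-g))) = (1-c) powr (-g) * poly R (-g)"
    by (simp add: R poly_sum sum_distrib_left)
  moreover have "poly (Qpoly c N q) (real k) * wt c g k =
      (c/(c-1))^N * (\<Sum>t\<le>N. q t * ((c-1)/c)^t * (poly (ffpoly t) (real k) * wt c g k))" for k
    by (simp add: Qpoly_def poly_sum sum_distrib_left sum_distrib_right mult_ac)
  ultimately show ?thesis by simp
qed

lemma poly_Q_nat:
  assumes c: "0 < c" "c < 1" and R: "R = (\<Sum>t\<le>N. smult (q t) (ffpoly t))"
  shows "poly (Qpoly c N q) (real x) =
     (c/(c-1))^N * ((1/c^x) * (\<Sum>l\<le>x. real (x choose l) * (c-1)^l * poly R (real l)))"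
proof -
  have "(\<Sum>l\<le>x. real (x choose l) * (c-1)^l * poly R (real l)) =
     (\<Sum>l\<le>x. \<Sum>t\<le>N. q t * fact t * (real (x choose l) * real (l choose t) * (c-1)^l))"
    by (simp add: R poly_sum poly_ffpoly_nat sum_distrib_left mult_ac)
  also have "\<dots> = (\<Sum>t\<le>N. q t * fact t * (\<Sum>l\<le>x. real (x choose l) * real (l choose t) * (c-1)^l))"
    by (subst sum.swap) (simp add: sum_distrib_left)
  also have "\<dots> = (\<Sum>t\<le>N. q t * fact t * (real (x choose t) * (c-1)^t * c^(x-t)))"
    by (simp add: binom_sum)
  finally have S: "(\<Sum>l\<le>x. real (x choose l) * (c-1)^l * poly R (real l)) =
      (\<Sum>t\<le>N. q t * fact t * (real (x choose t) * (c-1)^t * c^(x-t)))" .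
  have "(1/c^x) * (\<Sum>t\<le>N. q t * fact t * (real (x choose t) * (c-1)^t * c^(x-t))) =
      (\<Sum>t\<le>N. q t * ((c-1)/c)^t * (fact t * real (x choose t)))"
    unfolding sum_distrib_left
  proof (rule sum.cong)
    fix t assume "t \<in> {..N}"
    show "1 / c ^ x * (q t * fact t * (real (x choose t) * (c - 1) ^ t * c ^ (x - t))) =
         q t * ((c - 1) / c) ^ t * (fact t * real (x choose t))"
    proof (cases "t \<le> x")
      case True
      have "c^(x-t) = c^x / c^t" using c True by (simp add: power_diff)
      then show ?thesis using c by (simp add: field_simps power_divide)
    next
      case False
      then show ?thesis by (simp add: binomial_eq_0)
    qed
  qed simp
  thus ?thesis using S
    by (simp add: Qpoly_def poly_sum poly_ffpoly_nat)
qed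



definition Rpoly :: "nat \<Rightarrow> (nat \<Rightarrow> real) \<Rightarrow> (nat \<Rightarrow> nat) \<Rightarrow> real poly" where
  "Rpoly p \<beta> m = (\<Prod>j<p. pochpoly (\<beta> j) (m j))"

lemma poly_Rpoly: "poly (Rpoly p \<beta> m) y = (\<Prod>j<p. pochhammer (\<beta> j + y) (m j))"
  by (simp add: Rpoly_def poly_prod poly_pochpoly)

lemma pochpoly_nz: "pochpoly g t \<noteq> 0"
  using lc_pochpoly[of g t] by auto

lemma degree_Rpoly: "degree (Rpoly p \<beta> m) = (\<Sum>j<p. m j)"
  unfolding Rpoly_def by (subst degree_prod_eq_sum_degree) (auto simp: pochpoly_nz degree_pochpoly)

lemma lc_Rpoly: "lead_coeff (Rpoly p \<beta> m) = 1"
  unfolding Rpoly_def by (simp add: lead_coeff_prod lc_pochpoly)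

definition qco :: "nat \<Rightarrow> (nat \<Rightarrow> real) \<Rightarrow> (nat \<Rightarrow> nat) \<Rightarrow> nat \<Rightarrow> real" where
  "qco p \<beta> m = (SOME q. Rpoly p \<beta> m = (\<Sum>t\<le>(\<Sum>j<p. m j). smult (q t) (ffpoly t)))"

lemma qco: "Rpoly p \<beta> m = (\<Sum>t\<le>(\<Sum>j<p. m j). smult (qco p \<beta> m t) (ffpoly t))"
proof -
  have "\<exists>q. Rpoly p \<beta> m = (\<Sum>t\<le>(\<Sum>j<p. m j). smult (q t) (ffpoly t))"
    by (rule expand[OF degree_ffpoly lc_ffpoly]) (simp add: degree_Rpoly)
  thus ?thesis unfolding qco_def by (rule someI_ex)
qed

lemma qco_top: "qco p \<beta> m (\<Sum>j<p. m j) = 1"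
proof -
  have "qco p \<beta> m (\<Sum>j<p. m j) = coeff (Rpoly p \<beta> m) (\<Sum>j<p. m j)"
    by (subst qco) (simp only: expand_coeff_top[OF degree_ffpoly lc_ffpoly])
  also have "\<dots> = 1" using lc_Rpoly[of p \<beta> m] by (simp add: degree_Rpoly)
  finally show ?thesis .
qed

definition QQ :: "nat \<Rightarrow> (nat \<Rightarrow> real) \<Rightarrow> real \<Rightarrow> (nat \<Rightarrow> nat) \<Rightarrow> real poly" where
  "QQ p \<beta> c m = Qpoly c (\<Sum>j<p. m j) (qco p \<beta> m)"

lemma QQ_deg:
  assumes c: "0 < c" "c < 1"
  shows "degree (QQ p \<beta> c m) = (\<Sum>j<p. m j) \<and> lead_coeff (QQ p \<beta> c m) = 1"
proof -
  define N where "N = (\<Sum>j<p. m j)"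
  define S where "S = (\<Sum>t\<le>N. smult (qco p \<beta> m t * ((c-1)/c)^t) (ffpoly t))"
  have Q: "QQ p \<beta> c m = smult ((c/(c-1))^N) S" by (simp add: QQ_def Qpoly_def N_def S_def)
  have dS: "degree S \<le> N" unfolding S_def by (rule expand_degree[OF degree_ffpoly])
  have cS: "coeff S N = qco p \<beta> m N * ((c-1)/c)^N"
    unfolding S_def by (rule expand_coeff_top[OF degree_ffpoly lc_ffpoly])
  have "coeff (QQ p \<beta> c m) N = (c/(c-1))^N * ((c-1)/c)^N"
    using cS qco_top[of p \<beta> m] by (simp add: Q N_def)
  also have "\<dots> = 1" using c by (simp flip: power_mult_distrib)
  finally have cN: "coeff (QQ p \<beta> c m) N = 1" .
  have "degree (QQ p \<beta> c m) \<le> N" using dS by (simp add: Q)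
  moreover have "N \<le> degree (QQ p \<beta> c m)" using cN by (intro le_degree) simp
  ultimately have "degree (QQ p \<beta> c m) = N" by simp
  with cN show ?thesis by (simp add: N_def)
qed

lemma QQ_L:
  assumes c: "0 < c" "c < 1"
  shows "(\<lambda>k. poly (QQ p \<beta> c m) (real k) * wt c g k) sums
           ((c/(c-1))^(\<Sum>j<p. m j) * ((1-c) powr (-g) * (\<Prod>j<p. pochhammer (\<beta> j - g) (m j))))"
  using L_Q[OF c qco[of p \<beta> m], of g] unfolding QQ_def by (simp add: poly_Rpoly)

lemma wt_shift: "pochhammer (g + real k) t * wt c g k = pochhammer g t * wt c (g + real t) k"
proof -
  have "pochhammer g k * pochhammer (g + real k) t = pochhammer g (k + t)"
    by (simp add: pochhammer_product')
  also have "\<dots> = pochhammer g (t + k)" by (simp add: add.commute)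
  also have "\<dots> = pochhammer g t * pochhammer (g + real t) k" by (simp add: pochhammer_product')
  finally have e: "pochhammer g k * pochhammer (g + real k) t = pochhammer g t * pochhammer (g + real t) k" .
  show ?thesis unfolding wt_def using e
    by (metis (no_types, lifting) mult.commute times_divide_eq_right mult.assoc)
qed

lemma test_expand:
  assumes T: "T = (\<Sum>t\<le>d. smult (a t) (pochpoly g t))"
    and L: "\<And>t. t \<le> d \<Longrightarrow> (\<lambda>k. poly D (real k) * wt c (g + real t) k) sums L t"
  shows "(\<lambda>k. poly T (real k) * poly D (real k) * wt c g k) sums (\<Sum>t\<le>d. a t * pochhammer g t * L t)"
proof -
  have "(\<lambda>k. \<Sum>t\<le>d. a t * pochhammer g t * (poly D (real k) * wt c (g + real t) k)) sums (\<Sum>t\<le>d. a t * pochhammer g t * L t)"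
    by (intro sums_sum sums_mult L) simp
  moreover have "poly T (real k) * poly D (real k) * wt c g k =
     (\<Sum>t\<le>d. a t * pochhammer g t * (poly D (real k) * wt c (g + real t) k))" for k
  proof -
    have "poly T (real k) * poly D (real k) * wt c g k =
       (\<Sum>t\<le>d. a t * poly D (real k) * (pochhammer (g + real k) t * wt c g k))"
      by (simp add: T poly_sum poly_pochpoly sum_distrib_left sum_distrib_right mult_ac)
    also have "\<dots> = (\<Sum>t\<le>d. a t * pochhammer g t * (poly D (real k) * wt c (g + real t) k))"
      by (intro sum.cong refl, subst wt_shift, simp add: mult_ac)
    finally show ?thesis .
  qed
  ultimately show ?thesis by simp
qed



definition orth :: "nat \<Rightarrow> (nat \<Rightarrow> real) \<Rightarrow> real \<Rightarrow> (nat \<Rightarrow> nat) \<Rightarrow> real poly \<Rightarrow> bool" where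
  "orth p \<beta> c m D \<longleftrightarrow>
     (\<forall>i<p. \<forall>j<m i. (\<lambda>k. real k ^ j * poly D (real k) * wt c (\<beta> i) k) sums 0)"

lemma monom_poly_nat: "poly (monom 1 j) (real k) = real k ^ j"
  by (simp add: poly_monom)

lemma test_QQ:
  assumes c: "0 < c" "c < 1" and T: "T = (\<Sum>t\<le>d. smult (a t) (pochpoly g t))"
  shows "(\<lambda>k. poly T (real k) * poly (QQ p \<beta> c m) (real k) * wt c g k) sums
     (\<Sum>t\<le>d. a t * pochhammer g t * ((c/(c-1))^(\<Sum>j<p. m j) *
         ((1-c) powr (-(g + real t)) * (\<Prod>j<p. pochhammer (\<beta> j - (g + real t)) (m j)))))"
  by (rule test_expand[OF T]) (rule QQ_L[OF c])

lemma orth_QQ: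
  assumes c: "0 < c" "c < 1"
  shows "orth p \<beta> c m (QQ p \<beta> c m)"
  unfolding orth_def
proof (intro allI impI)
  fix i j assume i: "i < p" and j: "j < m i"
  obtain a where a: "monom 1 j = (\<Sum>t\<le>j. smult (a t) (pochpoly (\<beta> i) t))"
    using expand[OF degree_pochpoly[of "\<beta> i"] lc_pochpoly[of "\<beta> i"], of "monom (1::real) j" j]
    by (auto simp: degree_monom_eq)
  have "(\<lambda>k. poly (monom 1 j) (real k) * poly (QQ p \<beta> c m) (real k) * wt c (\<beta> i) k) sums
     (\<Sum>t\<le>j. a t * pochhammer (\<beta> i) t * ((c/(c-1))^(\<Sum>j<p. m j) *
         ((1-c) powr (-(\<beta> i + real t)) * (\<Prod>j<p. pochhammer (\<beta> j - (\<beta> i + real t)) (m j)))))"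
    by (rule test_QQ[OF c a])
  moreover have "(\<Prod>j<p. pochhammer (\<beta> j - (\<beta> i + real t)) (m j)) = 0" if "t \<le> j" for t
  proof -
    have h: "pochhammer (\<beta> i - (\<beta> i + real t)) (m i) = 0"
      using that j by (subst pochhammer_eq_0_iff) auto
    show ?thesis by (rule prod_zero, simp, rule bexI[of _ i], rule h, simp add: i)
  qed
  ultimately show "(\<lambda>k. real k ^ j * poly (QQ p \<beta> c m) (real k) * wt c (\<beta> i) k) sums 0"
    by (simp add: monom_poly_nat)
qed

lemma nondeg:
  assumes c: "0 < c" "c < 1" and i: "i < p"
    and pos: "\<And>i. i < p \<Longrightarrow> 0 < \<beta> i"
    and nint: "\<And>i j. i < p \<Longrightarrow> j < p \<Longrightarrow> i \<noteq> j \<Longrightarrow> \<beta> i - \<beta> j \<notin> \<int>"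
  shows "\<exists>V. V \<noteq> 0 \<and> (\<lambda>k. real k ^ (m i) * poly (QQ p \<beta> c m) (real k) * wt c (\<beta> i) k) sums V"
proof -
  obtain a where a: "monom 1 (m i) = (\<Sum>t\<le>m i. smult (a t) (pochpoly (\<beta> i) t))"
    using expand[OF degree_pochpoly[of "\<beta> i"] lc_pochpoly[of "\<beta> i"], of "monom (1::real) (m i)" "m i"]
    by (auto simp: degree_monom_eq)
  have atop: "a (m i) = 1"
    using arg_cong[OF a, of "\<lambda>P. coeff P (m i)"]
    by (simp add: expand_coeff_top[OF degree_pochpoly lc_pochpoly] coeff_monom)
  define F where "F = (\<lambda>t. a t * pochhammer (\<beta> i) t * ((c/(c-1))^(\<Sum>j<p. m j) *
         ((1-c) powr (-(\<beta> i + real t)) * (\<Prod>j<p. pochhammer (\<beta> j - (\<beta> i + real t)) (m j)))))"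
  have S: "(\<lambda>k. poly (monom 1 (m i)) (real k) * poly (QQ p \<beta> c m) (real k) * wt c (\<beta> i) k) sums
     (\<Sum>t\<le>m i. F t)"
    unfolding F_def by (rule test_QQ[OF c a])
  have z: "(\<Prod>j<p. pochhammer (\<beta> j - (\<beta> i + real t)) (m j)) = 0" if "t < m i" for t
  proof -
    have h: "pochhammer (\<beta> i - (\<beta> i + real t)) (m i) = 0"
      using that by (subst pochhammer_eq_0_iff) auto
    show ?thesis by (rule prod_zero, simp, rule bexI[of _ i], rule h, simp add: i)
  qed
  have "(\<Sum>t\<le>m i. F t) = (\<Sum>t\<in>{m i}. F t)"
    by (rule sum.mono_neutral_right) (auto simp: F_def z less_le)
  hence SV: "(\<Sum>t\<le>m i. F t) = F (m i)" by simp
  have nzj: "pochhammer (\<beta> j - (\<beta> i + real (m i))) (m j) \<noteq> 0" if j: "j \<in> {..<p}" for j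
  proof -
    show "pochhammer (\<beta> j - (\<beta> i + real (m i))) (m j) \<noteq> 0"
    proof
      assume "pochhammer (\<beta> j - (\<beta> i + real (m i))) (m j) = 0"
      then obtain k where k: "k < m j" "\<beta> j - (\<beta> i + real (m i)) = - real k"
        by (auto simp: pochhammer_eq_0_iff)
      show False
      proof (cases "j = i")
        case True
        with k show False by simp
      next
        case False
        have "\<beta> j - \<beta> i = real (m i) - real k" using k by simp
        also have "\<dots> \<in> \<int>" by simp
        finally show False using nint[of j i] False i j by auto
      qed
    qed
  qed
  have nz: "(\<Prod>j<p. pochhammer (\<beta> j - (\<beta> i + real (m i))) (m j)) \<noteq> 0"
    using prod_zero_iff[of "{..<p}" "\<lambda>j. pochhammer (\<beta> j - (\<beta> i + real (m i))) (m j)"] nzj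
    by blast
  have n1: "pochhammer (\<beta> i) (m i) \<noteq> 0" using pochhammer_pos[OF pos[OF i], of "m i"] by linarith
  have n2: "(c/(c-1))^(\<Sum>j<p. m j) \<noteq> 0" using c by simp
  have n3: "(1-c) powr (-(\<beta> i + real (m i))) \<noteq> 0" using c by simp
  have "F (m i) \<noteq> 0"
    unfolding F_def atop using n1 n2 n3 nz by simp
  thus ?thesis using S SV by (auto simp: monom_poly_nat)
qed



lemma orth_lin:
  assumes "orth p \<beta> c m D1" "orth p \<beta> c m D2"
  shows "orth p \<beta> c m (D1 - smult a D2)"
  unfolding orth_def
proof (intro allI impI)
  fix i j assume "i < p" "j < m i"
  hence s1: "(\<lambda>k. real k ^ j * poly D1 (real k) * wt c (\<beta> i) k) sums 0"
    and s2: "(\<lambda>k. real k ^ j * poly D2 (real k) * wt c (\<beta> i) k) sums 0"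
    using assms unfolding orth_def by auto
  have "(\<lambda>k. real k ^ j * poly D1 (real k) * wt c (\<beta> i) k - a * (real k ^ j * poly D2 (real k) * wt c (\<beta> i) k)) sums (0 - a * 0)"
    by (intro sums_diff sums_mult s1 s2)
  thus "(\<lambda>k. real k ^ j * poly (D1 - smult a D2) (real k) * wt c (\<beta> i) k) sums 0"
    by (simp add: algebra_simps)
qed

lemma orth_mono:
  assumes "orth p \<beta> c m D" "\<And>i. i < p \<Longrightarrow> m' i \<le> m i"
  shows "orth p \<beta> c m' D"
  unfolding orth_def
proof (intro allI impI)
  fix i j assume "i < p" "j < m' i"
  hence "j < m i" using assms(2)[of i] by simp
  thus "(\<lambda>k. real k ^ j * poly D (real k) * wt c (\<beta> i) k) sums 0"
    using assms(1) \<open>i < p\<close> unfolding orth_def by blast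
qed

lemma deg_reduce:
  fixes P Q :: "real poly"
  assumes "degree P \<le> Suc N" "degree Q = Suc N" "lead_coeff Q = 1"
  shows "degree (P - smult (coeff P (Suc N)) Q) \<le> N"
proof (rule degree_le, intro allI impI)
  fix i assume "N < i"
  show "coeff (P - smult (coeff P (Suc N)) Q) i = 0"
  proof (cases "i = Suc N")
    case True
    then show ?thesis using assms by simp
  next
    case False
    with \<open>N < i\<close> have "Suc N < i" by simp
    hence "coeff P i = 0" "coeff Q i = 0"
      using assms by (auto intro: coeff_eq_0)
    thus ?thesis by simp
  qed
qed

lemma uniq:
  assumes c: "0 < c" "c < 1"
    and pos: "\<And>i. i < p \<Longrightarrow> 0 < \<beta> i"
    and nint: "\<And>i j. i < p \<Longrightarrow> j < p \<Longrightarrow> i \<noteq> j \<Longrightarrow> \<beta> i - \<beta> j \<notin> \<int>"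
  shows "(\<Sum>j<p. m j) = N \<Longrightarrow> degree D \<le> N \<Longrightarrow> orth p \<beta> c m D \<Longrightarrow>
          D = smult (coeff D N) (QQ p \<beta> c m)"
proof (induction N arbitrary: m D)
  case 0
  have "degree (QQ p \<beta> c m) = 0" "lead_coeff (QQ p \<beta> c m) = 1"
    using QQ_deg[OF c, of p \<beta> m] 0 by auto
  hence "QQ p \<beta> c m = 1" using degree_0_id[of "QQ p \<beta> c m"] by (simp add: one_pCons)
  moreover have "[:coeff D 0:] = D" using degree_0_id[of D] 0 by simp
  ultimately show ?case by (simp add: one_pCons)
next
  case (Suc N)
  have "\<exists>i<p. 0 < m i"
  proof (rule ccontr)
    assume "\<not> (\<exists>i<p. 0 < m i)"
    hence "(\<Sum>j<p. m j) = 0" by (auto intro!: sum.neutral)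
    with Suc.prems(1) show False by simp
  qed
  then obtain i where i: "i < p" "0 < m i" by blast
  define m' where "m' = m(i := m i - 1)"
  have r1: "(\<Sum>j<p. m j) = m i + (\<Sum>j\<in>{..<p}-{i}. m j)"
    using i by (subst sum.remove[of _ i]) auto
  have r2: "(\<Sum>j<p. m' j) = m' i + (\<Sum>j\<in>{..<p}-{i}. m' j)"
    using i by (subst sum.remove[of _ i]) auto
  have r3: "(\<Sum>j\<in>{..<p}-{i}. m' j) = (\<Sum>j\<in>{..<p}-{i}. m j)"
    by (rule sum.cong) (auto simp: m'_def)
  have sm': "(\<Sum>j<p. m' j) = N"
    using r1 r2 r3 Suc.prems(1) i by (simp add: m'_def)
  define Q where "Q = QQ p \<beta> c m"
  have dQ: "degree Q = Suc N" "lead_coeff Q = 1"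
    using QQ_deg[OF c, of p \<beta> m] Suc.prems(1) by (auto simp: Q_def)
  define D' where "D' = D - smult (coeff D (Suc N)) Q"
  have dD': "degree D' \<le> N" unfolding D'_def
    by (rule deg_reduce[OF Suc.prems(2) dQ])
  have oD': "orth p \<beta> c m D'" unfolding D'_def Q_def
    by (rule orth_lin[OF Suc.prems(3) orth_QQ[OF c]])
  have oD'': "orth p \<beta> c m' D'"
    by (rule orth_mono[OF oD']) (simp add: m'_def)
  have D'eq: "D' = smult (coeff D' N) (QQ p \<beta> c m')"
    by (rule Suc.IH[OF sm' dD' oD''])
  obtain V where V: "V \<noteq> 0"
     "(\<lambda>k. real k ^ (m' i) * poly (QQ p \<beta> c m') (real k) * wt c (\<beta> i) k) sums V"
  proof -
    have "\<exists>V. V \<noteq> 0 \<and> (\<lambda>k. real k ^ (m' i) * poly (QQ p \<beta> c m') (real k) * wt c (\<beta> i) k) sums V"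
      by (rule nondeg[OF c i(1) pos nint])
    thus ?thesis using that by blast
  qed
  have "m' i < m i" using i by (simp add: m'_def)
  hence s0: "(\<lambda>k. real k ^ (m' i) * poly D' (real k) * wt c (\<beta> i) k) sums 0"
    using oD' i unfolding orth_def by blast
  have "(\<lambda>k. coeff D' N * (real k ^ (m' i) * poly (QQ p \<beta> c m') (real k) * wt c (\<beta> i) k)) sums (coeff D' N * V)"
    by (rule sums_mult[OF V(2)])
  moreover have "(\<lambda>k. real k ^ (m' i) * poly D' (real k) * wt c (\<beta> i) k) =
      (\<lambda>k. coeff D' N * (real k ^ (m' i) * poly (QQ p \<beta> c m') (real k) * wt c (\<beta> i) k))"
  proof
    fix k
    have "poly D' (real k) = coeff D' N * poly (QQ p \<beta> c m') (real k)"
      using arg_cong[OF D'eq, of "\<lambda>P. poly P (real k)"] by simp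
    thus "real k ^ (m' i) * poly D' (real k) * wt c (\<beta> i) k =
      coeff D' N * (real k ^ (m' i) * poly (QQ p \<beta> c m') (real k) * wt c (\<beta> i) k)"
      by (simp add: mult_ac)
  qed
  ultimately have s1: "(\<lambda>k. real k ^ (m' i) * poly D' (real k) * wt c (\<beta> i) k) sums (coeff D' N * V)"
    by simp
  have "coeff D' N * V = 0" using sums_unique2[OF s0 s1] by simp
  hence "coeff D' N = 0" using V(1) by simp
  note D'eq
  also have "smult (coeff D' N) (QQ p \<beta> c m') = 0"
    by (simp only: \<open>coeff D' N = 0\<close> smult_0_left)
  finally have "D' = 0" .
  thus ?case by (simp add: D'_def Q_def)
qed

lemma mw:
  assumes "0 < b"
  shows "meixner2_weight b c k = wt c b k"
proof -
  have nb: "b \<notin> \<int>\<^sub>\<le>\<^sub>0" using assms by (auto elim!: nonpos_Ints_cases)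
  have g: "Gamma (real k + 1) = fact k" using Gamma_fact[of k] by (simp add: add.commute)
  have "Gamma b \<noteq> 0" using nb by (simp add: Gamma_eq_zero_iff)
  thus ?thesis unfolding meixner2_weight_def wt_def g pochhammer_Gamma[OF nb] by simp
qed



lemma poch_swap: "pochhammer b m * pochhammer (b + real m) l = pochhammer b l * pochhammer (b + real l) (m::nat)"
proof -
  have "pochhammer b m * pochhammer (b + real m) l = pochhammer b (m + l)"
    by (simp add: pochhammer_product')
  also have "\<dots> = pochhammer b (l + m)" by (simp add: add.commute)
  also have "\<dots> = pochhammer b l * pochhammer (b + real l) m" by (simp add: pochhammer_product')
  finally show ?thesis .
qed

lemma hyp:
  assumes pos: "\<And>i. i < p \<Longrightarrow> 0 < \<beta> i"
  shows "(\<Prod>j<p. pochhammer (\<beta> j) (m j)) *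
     hypergeom (- real x # map (\<lambda>j. \<beta> j + real (m j)) [0..<p]) (map \<beta> [0..<p]) z =
     (\<Sum>l\<le>x. real (x choose l) * (-z)^l * poly (Rpoly p \<beta> m) (real l))"
proof -
  define T where "T = (\<lambda>l. (pochhammer (- real x) l * (\<Prod>j<p. pochhammer (\<beta> j + real (m j)) l)
       / (\<Prod>j<p. pochhammer (\<beta> j) l)) * z ^ l / fact l)"
  have h1: "hypergeom (- real x # map (\<lambda>j. \<beta> j + real (m j)) [0..<p]) (map \<beta> [0..<p]) z = suminf T"
    unfolding hypergeom_def T_def by (simp add: plist o_def)
  have h2: "suminf T = (\<Sum>l\<in>{..x}. T l)"
  proof (rule suminf_finite)
    fix l assume "l \<notin> {..x}"
    hence "pochhammer (- real x) l = 0" by (subst pochhammer_eq_0_iff) auto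
    thus "T l = 0" by (simp add: T_def)
  qed simp
  have h3: "(\<Prod>j<p. pochhammer (\<beta> j) (m j)) * T l = real (x choose l) * (-z)^l * poly (Rpoly p \<beta> m) (real l)" for l
  proof -
    have nz: "(\<Prod>j<p. pochhammer (\<beta> j) l) \<noteq> 0"
      using pochhammer_pos[OF pos] prod_zero_iff[of "{..<p}" "\<lambda>j. pochhammer (\<beta> j) l"]
      by (metis finite_lessThan lessThan_iff less_irrefl)
    have "(\<Prod>j<p. pochhammer (\<beta> j) (m j)) * (\<Prod>j<p. pochhammer (\<beta> j + real (m j)) l)
        = (\<Prod>j<p. pochhammer (\<beta> j) l) * (\<Prod>j<p. pochhammer (\<beta> j + real l) (m j))"
      by (simp add: poch_swap flip: prod.distrib)
    hence A: "(\<Prod>j<p. pochhammer (\<beta> j) (m j)) * (\<Prod>j<p. pochhammer (\<beta> j + real (m j)) l)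
        / (\<Prod>j<p. pochhammer (\<beta> j) l) = poly (Rpoly p \<beta> m) (real l)"
      using nz by (simp add: poly_Rpoly)
    have "real x gchoose l = (-1)^l * pochhammer (- real x) l / fact l"
      by (rule gbinomial_pochhammer)
    hence e: "(-1)^l * pochhammer (- real x) l = fact l * (real x gchoose l)"
      by (simp add: field_simps)
    have "pochhammer (- real x) l = ((-1)^l * (-1)^l) * pochhammer (- real x) l"
      by (simp flip: power_mult_distrib)
    also have "\<dots> = (-1)^l * (fact l * (real x gchoose l))"
      by (simp only: mult.assoc e)
    finally have e2: "pochhammer (- real x) l = (-1)^l * (fact l * (real x gchoose l))" .
    have B: "pochhammer (- real x) l / fact l = (-1)^l * real (x choose l)"
      by (simp add: e2 binomial_gbinomial)
    have C: "(-z)^l = (-1)^l * z^l" by (rule power_minus)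
    have "(\<Prod>j<p. pochhammer (\<beta> j) (m j)) * T l =
        ((\<Prod>j<p. pochhammer (\<beta> j) (m j)) * (\<Prod>j<p. pochhammer (\<beta> j + real (m j)) l)
        / (\<Prod>j<p. pochhammer (\<beta> j) l)) * (pochhammer (- real x) l / fact l) * z^l"
      by (simp add: T_def)
    also have "\<dots> = poly (Rpoly p \<beta> m) (real l) * ((-1)^l * real (x choose l)) * z^l"
      by (simp only: A B)
    also have "\<dots> = real (x choose l) * (-z)^l * poly (Rpoly p \<beta> m) (real l)"
      by (simp only: C mult_ac)
    finally show ?thesis .
  qed
  show ?thesis unfolding h1 h2 sum_distrib_left h3 by simp
qed

theorem mainTheorem4:
  fixes p :: nat and \<beta> :: "nat \<Rightarrow> real" and c :: real and n :: "nat \<Rightarrow> nat"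
    and B :: "real poly"
  assumes "0 < c" and "c < 1"
    and "\<And>i. i < p \<Longrightarrow> 0 < \<beta> i"
    and "\<And>i j. i < p \<Longrightarrow> j < p \<Longrightarrow> i \<noteq> j \<Longrightarrow> \<beta> i - \<beta> j \<notin> \<int>"
    and "is_typeII_meixner2 p \<beta> c n B"
  shows "\<forall>x::nat. poly B (real x) =
           (c / (c - 1)) ^ (\<Sum>i<p. n i) * (\<Prod>j<p. pochhammer (\<beta> j) (n j)) * (1 / c ^ x)
           * hypergeom (- real x # map (\<lambda>j. \<beta> j + real (n j)) [0..<p]) (map \<beta> [0..<p]) (1 - c)"
proof
  fix x :: nat
  have c: "0 < c" "c < 1" by fact+
  define N where "N = (\<Sum>i<p. n i)"
  have dB: "degree B = N" and lB: "lead_coeff B = 1"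
    and oB: "\<And>i j. i < p \<Longrightarrow> j < n i \<Longrightarrow>
        (\<lambda>k. real k ^ j * poly B (real k) * meixner2_weight (\<beta> i) c k) sums 0"
    using assms(5) unfolding is_typeII_meixner2_def N_def by auto
  have "orth p \<beta> c n B"
    unfolding orth_def using oB mw[OF assms(3)] by simp
  hence "B = smult (coeff B N) (QQ p \<beta> c n)"
    by (intro uniq[OF c assms(3) assms(4)]) (auto simp: N_def dB)
  hence BQ: "B = QQ p \<beta> c n" using lB dB by simp
  have "poly B (real x) = (c/(c-1))^N * ((1/c^x) *
      (\<Sum>l\<le>x. real (x choose l) * (c-1)^l * poly (Rpoly p \<beta> n) (real l)))"
    unfolding BQ QQ_def N_def by (rule poly_Q_nat[OF c qco])
  also have "(\<Sum>l\<le>x. real (x choose l) * (c-1)^l * poly (Rpoly p \<beta> n) (real l)) =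
     (\<Prod>j<p. pochhammer (\<beta> j) (n j)) *
     hypergeom (- real x # map (\<lambda>j. \<beta> j + real (n j)) [0..<p]) (map \<beta> [0..<p]) (1 - c)"
    using hyp[OF assms(3), where m=n and x=x and z="1 - c"] by simp
  finally show "poly B (real x) =
           (c / (c - 1)) ^ (\<Sum>i<p. n i) * (\<Prod>j<p. pochhammer (\<beta> j) (n j)) * (1 / c ^ x)
           * hypergeom (- real x # map (\<lambda>j. \<beta> j + real (n j)) [0..<p]) (map \<beta> [0..<p]) (1 - c)"
    by (simp add: N_def mult_ac)
qed


end
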